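(* Consider a \textsc{Brick} payment channel between two parties $A$ and $B$ with a committee of $n=3f+1$ Wardens and threshold $t=2f+1$, as described in the context. Assume the network is asynchronous, at most one of the two channel parties is Byzantine (the other is honest), and at most $f$ of the Wardens are Byzantine (the remaining Wardens are honest). Then \textsc{Brick} achieves safety: the channel can only close in the freshest committed state.
   Context: Setting and model. Two channel parties $A,B$ and a committee of Wardens $W_1,\dots,W_n$ with $n=3f+1$ and threshold $t=2f+1$. All participants are computationally bounded; communication channels are authenticated and secure, the hash function $H$ is cryptographically secure (collision and pre-image resistant), and signatures are unforgeable. The underlying blockchain supports smart contracts and satisfies persistence (once a transaction is in the permanent part of one honest party's chain it is in every honest party's chain) and liveness (a transaction given to all honest parties for long enough is eventually included on-chain). The network is asynchronous: every message sent by an honest party is eventually delivered to every honest party, with no known delay bound. Honest participants follow the protocol; Byzantine ones deviate arbitrarily. Channel states carry sequence numbers $1,2,\dots$; $s_i$ denotes the state with sequence number $i$; $\sigma(\cdot)$ denotes the joint signature of both $A$ and $B$, $\sigma_{W_j}(\cdot)$ a signature of Warden $W_j$. Protocol \textsc{Brick}. Open: both parties sign $open(H(W_1),\dots,H(W_n),t,s_1,F)$ (committing Warden identities, threshold and a closing fee $F$), the initial state is announced via Update/Consistent Broadcast, the opening is published on-chain, and each Warden locks collateral in the smart contract. Update: for a new state $s_i$ the parties sign and exchange $\{H(s_i,r_i),i\}$ with a random $r_i$; after receiving the counterparty's signature on it, each party sends its signature on $i$, forming the announcement $\{M,\sigma(M)\}$ with $M=i$. Consistent Broadcast: each party sends the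 announcement (with a small fee) to all Wardens; a Warden checks that both parties' signatures are present and that the sequence number is exactly one higher than its stored one; if it has already published a closing announcement it ignores the update, otherwise it replaces its stored announcement, signs $M$ and returns $\sigma_{W_j}(M)$. A party considers the state committed once it holds at least $t$ Warden signatures on $M$, and only then proceeds. Optimistic Close: a party requests closing on state $s$; both parties sign $s$ and it is published on-chain. Pessimistic Close: a party sends $close()$ to all Wardens; each Warden publishes on-chain $\sigma_{W_j}(M,close)$ for its stored announcement $M$ and stops signing updates; once $t$ such closing announcements are on-chain the party takes the maximum sequence number $i$ among them and publishes $s_i$, $r_i$ and both parties' signatures on $\{H(s_i,r_i),i\}$; after inclusion in a permanent block the smart contract recomputes $H(s_i,r_i)$, verifies both parties' signatures on $\{H(s_i,r_i),i\}$, verifies that the $t$ announcements come from the Wardens committed at opening and that $i$ is their maximum sequence number, and then closes the channel in $s_i$. Definitions. A state $s_i$ is valid if both parties have signed it, it is the freshest (no subsequent state $s_{i+1}$ is valid), and the committee has not invalidated it (the committee invalidates $s_i$ if the channel closes in $s_{i-1}$). A state is committed if it was signed by at least $2f+1$ Wardens, or it is valid and included in a block in the persistent part of the blockchain. A channel is closed when its locked funds are spent on-chain. Safety: the channel will only close in the freshest committed state. *)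

theory Defs
  imports Main
begin

datatype party = PA | PB

fun other :: "party \<Rightarrow> party" where
  "other PA = PB" | "other PB = PA"

text \<open>Committee size n = 3f+1 and threshold t = 2f+1. Wardens are W_0 .. W_(n-1).\<close>
definition nW :: "nat \<Rightarrow> nat" where "nW f = 3 * f + 1"
definition thr :: "nat \<Rightarrow> nat" where "thr f = 2 * f + 1"

text \<open>Signed messages (symbolic, unforgeable signatures; the hash commitment H(s,r)
  is idealised as the pair (s,r), i.e. a collision-free commitment).
  SigUpd p (s,r) i : signature of party p on {H(s,r), i}
  SigSeq p i       : signature of party p on the announcement M = i
  SigOpt p s i     : signature of party p on the optimistic close of state s with sequence number i
  WSig j i         : signature of Warden W_j on M = i\<close>
datatype 's msg =
    SigUpd party "'s \<times> nat" nat
  | SigSeq party nat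
  | SigOpt party 's nat
  | WSig nat nat

text \<open>Global configuration.
  pool     : all signatures produced so far (available to everyone, incl. the adversary;
             asynchronous delivery = honest participants may react to any of them at any later time)
  pcur     : for a party, the sequence number of its latest announced state
  pstop    : party has agreed to an optimistic close (stops updating)
  wstored  : sequence number of the announcement stored by a Warden
  wclosed  : Warden has published its closing announcement
  annc     : closing announcements on chain, pairs (Warden index, sequence number)
  chclosed : Some (s,i) once the channel's funds are spent closing in state s_i = s\<close>
record 's conf =
  pool :: "'s msg set"
  pcur :: "party \<Rightarrow> nat"
  pstop :: "party \<Rightarrow> bool"
  wstored :: "nat \<Rightarrow> nat"
  wclosed :: "nat \<Rightarrow> bool"
  annc :: "(nat \<times> nat) set"
  chclosed :: "('s \<times> nat) option"

definition init_conf :: "'s \<Rightarrow> nat \<Rightarrow> 's conf" where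
  "init_conf s1 r1 =
     \<lparr> pool = {SigUpd PA (s1, r1) 1, SigUpd PB (s1, r1) 1, SigSeq PA 1, SigSeq PB 1},
       pcur = (\<lambda>_. 1), pstop = (\<lambda>_. False), wstored = (\<lambda>_. 0), wclosed = (\<lambda>_. False),
       annc = {}, chclosed = None \<rparr>"

text \<open>Transitions. Byz = set of Byzantine Wardens, BP = set of Byzantine parties.\<close>
inductive step :: "nat \<Rightarrow> nat set \<Rightarrow> party set \<Rightarrow> 's conf \<Rightarrow> 's conf \<Rightarrow> bool"
  for f :: nat and Byz :: "nat set" and BP :: "party set" where
  byz_party_upd: "p \<in> BP \<Longrightarrow> step f Byz BP c (c\<lparr>pool := insert (SigUpd p x i) (pool c)\<rparr>)"
| byz_party_seq: "p \<in> BP \<Longrightarrow> step f Byz BP c (c\<lparr>pool := insert (SigSeq p i) (pool c)\<rparr>)"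
| byz_party_opt: "p \<in> BP \<Longrightarrow> step f Byz BP c (c\<lparr>pool := insert (SigOpt p s i) (pool c)\<rparr>)"
| byz_warden_sig: "j \<in> Byz \<Longrightarrow> step f Byz BP c (c\<lparr>pool := insert (WSig j i) (pool c)\<rparr>)"
| byz_warden_close: "j \<in> Byz \<Longrightarrow> step f Byz BP c (c\<lparr>annc := insert (j, i) (annc c)\<rparr>)"
| hon_party_upd: "\<lbrakk> p \<notin> BP; \<not> pstop c p; pcur c p = k;
      thr f \<le> card {j. j < nW f \<and> WSig j k \<in> pool c};
      \<forall>y. SigUpd p y (Suc k) \<notin> pool c \<rbrakk>
    \<Longrightarrow> step f Byz BP c (c\<lparr>pool := insert (SigUpd p (s, r) (Suc k)) (pool c)\<rparr>)"
| hon_party_seq: "\<lbrakk> p \<notin> BP; \<not> pstop c p; pcur c p = k;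
      SigUpd p x (Suc k) \<in> pool c; SigUpd (other p) x (Suc k) \<in> pool c \<rbrakk>
    \<Longrightarrow> step f Byz BP c (c\<lparr>pool := insert (SigSeq p (Suc k)) (pool c),
                          pcur := (pcur c)(p := Suc k)\<rparr>)"
| hon_party_opt: "\<lbrakk> p \<notin> BP; pcur c p = k; SigUpd p (s, r) k \<in> pool c \<rbrakk>
    \<Longrightarrow> step f Byz BP c (c\<lparr>pool := insert (SigOpt p s k) (pool c),
                          pstop := (pstop c)(p := True)\<rparr>)"
| hon_warden_sig: "\<lbrakk> j < nW f; j \<notin> Byz; \<not> wclosed c j; wstored c j = k;
      SigSeq PA (Suc k) \<in> pool c; SigSeq PB (Suc k) \<in> pool c \<rbrakk>
    \<Longrightarrow> step f Byz BP c (c\<lparr>pool := insert (WSig j (Suc k)) (pool c),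
                          wstored := (wstored c)(j := Suc k)\<rparr>)"
  \<comment> \<open>Honest Warden: on a close() request (which any party may send at any time) publish
      the closing announcement for the stored M and stop signing\<close>
| hon_warden_close: "\<lbrakk> j < nW f; j \<notin> Byz; \<not> wclosed c j \<rbrakk>
    \<Longrightarrow> step f Byz BP c (c\<lparr>annc := insert (j, wstored c j) (annc c),
                          wclosed := (wclosed c)(j := True)\<rparr>)"
| contract_opt: "\<lbrakk> chclosed c = None; SigOpt PA s i \<in> pool c; SigOpt PB s i \<in> pool c \<rbrakk>
    \<Longrightarrow> step f Byz BP c (c\<lparr>chclosed := Some (s, i)\<rparr>)"
| contract_pess: "\<lbrakk> chclosed c = None; Q \<subseteq> annc c; inj_on fst Q; card Q = thr f;
      \<forall>q\<in>Q. fst q < nW f; i = Max (snd ` Q);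
      SigUpd PA (s, r) i \<in> pool c; SigUpd PB (s, r) i \<in> pool c \<rbrakk>
    \<Longrightarrow> step f Byz BP c (c\<lparr>chclosed := Some (s, i)\<rparr>)"

definition reachable :: "nat \<Rightarrow> nat set \<Rightarrow> party set \<Rightarrow> 's \<Rightarrow> nat \<Rightarrow> 's conf \<Rightarrow> bool" where
  "reachable f Byz BP s1 r1 c \<longleftrightarrow> (step f Byz BP)\<^sup>*\<^sup>* (init_conf s1 r1) c"

definition both_signed :: "'s conf \<Rightarrow> 's \<Rightarrow> nat \<Rightarrow> bool" where
  "both_signed c s i \<longleftrightarrow> (\<exists>r. SigUpd PA (s, r) i \<in> pool c \<and> SigUpd PB (s, r) i \<in> pool c)"

definition invalidated :: "'s conf \<Rightarrow> nat \<Rightarrow> bool" where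
  "invalidated c i \<longleftrightarrow> (\<exists>s. chclosed c = Some (s, i - 1)) \<and> i \<ge> 1"

definition valid :: "'s conf \<Rightarrow> 's \<Rightarrow> nat \<Rightarrow> bool" where
  "valid c s i \<longleftrightarrow> both_signed c s i \<and> \<not> (\<exists>s'. both_signed c s' (Suc i)) \<and> \<not> invalidated c i"

text \<open>On-chain states: the initial state (part of the opening transaction) and the closing state.\<close>
definition on_chain :: "'s \<Rightarrow> 's conf \<Rightarrow> 's \<Rightarrow> nat \<Rightarrow> bool" where
  "on_chain s1 c s i \<longleftrightarrow> (s, i) = (s1, 1) \<or> chclosed c = Some (s, i)"

definition committed :: "nat \<Rightarrow> 's \<Rightarrow> 's conf \<Rightarrow> 's \<Rightarrow> nat \<Rightarrow> bool" where
  "committed f s1 c s i \<longleftrightarrow>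
     (both_signed c s i \<and> thr f \<le> card {j. j < nW f \<and> WSig j i \<in> pool c})
     \<or> (valid c s i \<and> on_chain s1 c s i)"

end

theory Submission
  imports Defs
begin

definition J6 :: "party set \<Rightarrow> 's conf \<Rightarrow> bool" where
 "J6 BP c \<longleftrightarrow> (\<forall>p s j. p \<notin> BP \<longrightarrow> SigOpt p s j \<in> pool c \<longrightarrow> pstop c p \<and> pcur c p = j \<and> (\<exists>r. SigUpd p (s,r) j \<in> pool c))"
definition J7 :: "party set \<Rightarrow> 's conf \<Rightarrow> bool" where
 "J7 BP c \<longleftrightarrow> (\<forall>p. p \<notin> BP \<longrightarrow> (\<exists>x. SigUpd p x (pcur c p) \<in> pool c \<and> SigUpd (other p) x (pcur c p) \<in> pool c))"
definition J8 :: "nat \<Rightarrow> party set \<Rightarrow> 's conf \<Rightarrow> bool" where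
 "J8 f BP c \<longleftrightarrow> (\<forall>p x k. p \<notin> BP \<longrightarrow> 1 \<le> k \<longrightarrow> SigUpd p x (Suc k) \<in> pool c \<longrightarrow> thr f \<le> card {j. j < nW f \<and> WSig j k \<in> pool c})"
definition J9 :: "nat \<Rightarrow> nat set \<Rightarrow> 's conf \<Rightarrow> bool" where
 "J9 f Byz c \<longleftrightarrow> (\<forall>w j. w < nW f \<longrightarrow> w \<notin> Byz \<longrightarrow> WSig w j \<in> pool c \<longrightarrow> j \<le> wstored c w \<and> SigSeq PA j \<in> pool c \<and> SigSeq PB j \<in> pool c)"

definition inv :: "nat \<Rightarrow> nat set \<Rightarrow> party set \<Rightarrow> 's \<Rightarrow> nat \<Rightarrow> 's conf \<Rightarrow> bool" where
 "inv f Byz BP s1 r1 c \<longleftrightarrow>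
 (\<forall>p x. p \<notin> BP \<longrightarrow> SigUpd p x 0 \<notin> pool c) \<and>
 (\<forall>p x. p \<notin> BP \<longrightarrow> SigUpd p x 1 \<in> pool c \<longrightarrow> x = (s1,r1)) \<and>
 (\<forall>p x y k. p \<notin> BP \<longrightarrow> SigUpd p x k \<in> pool c \<longrightarrow> SigUpd p y k \<in> pool c \<longrightarrow> x = y) \<and>
 (\<forall>p. p \<notin> BP \<longrightarrow> 1 \<le> pcur c p) \<and>
 (\<forall>p j. p \<notin> BP \<longrightarrow> SigSeq p j \<in> pool c \<longrightarrow> j \<le> pcur c p) \<and>
 J6 BP c \<and> J7 BP c \<and> J8 f BP c \<and> J9 f Byz c \<and>
 (\<forall>w v. w < nW f \<longrightarrow> w \<notin> Byz \<longrightarrow> (w,v) \<in> annc c \<longrightarrow> wclosed c w \<and> v = wstored c w)"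

lemma card_sub: "P \<subseteq> P' \<Longrightarrow> t \<le> card {j. j < n \<and> WSig j k \<in> P} \<Longrightarrow> t \<le> card {j. j < n \<and> WSig j k \<in> P'}"
  by (rule le_trans, assumption, rule card_mono) auto

lemma J6_pres: "J6 BP c \<Longrightarrow> pool c \<subseteq> pool c' \<Longrightarrow> (\<forall>p s j. p \<notin> BP \<longrightarrow> SigOpt p s j \<in> pool c' \<longrightarrow> SigOpt p s j \<in> pool c)
  \<Longrightarrow> (\<forall>p. p \<notin> BP \<longrightarrow> pstop c p \<longrightarrow> pstop c' p \<and> pcur c' p = pcur c p) \<Longrightarrow> J6 BP c'"
  unfolding J6_def by blast

lemma J7_pres: "J7 BP c \<Longrightarrow> pool c \<subseteq> pool c' \<Longrightarrow> (\<forall>p. p \<notin> BP \<longrightarrow> pcur c' p = pcur c p) \<Longrightarrow> J7 BP c'"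
  unfolding J7_def by (metis subsetD)

lemma J8_pres: "J8 f BP c \<Longrightarrow> pool c \<subseteq> pool c' \<Longrightarrow> (\<forall>p x k. p \<notin> BP \<longrightarrow> 1 \<le> k \<longrightarrow> SigUpd p x (Suc k) \<in> pool c' \<longrightarrow> SigUpd p x (Suc k) \<in> pool c) \<Longrightarrow> J8 f BP c'"
  unfolding J8_def
proof (intro allI impI)
  fix p x k assume a: "\<forall>p x k. p \<notin> BP \<longrightarrow> 1 \<le> k \<longrightarrow> SigUpd p x (Suc k) \<in> pool c \<longrightarrow> thr f \<le> card {j. j < nW f \<and> WSig j k \<in> pool c}"
    and b: "pool c \<subseteq> pool c'"
    and d: "\<forall>p x k. p \<notin> BP \<longrightarrow> 1 \<le> k \<longrightarrow> SigUpd p x (Suc k) \<in> pool c' \<longrightarrow> SigUpd p x (Suc k) \<in> pool c"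
    and e: "p \<notin> BP" "1 \<le> k" "SigUpd p x (Suc k) \<in> pool c'"
  have "thr f \<le> card {j. j < nW f \<and> WSig j k \<in> pool c}" using a d e by blast
  then show "thr f \<le> card {j. j < nW f \<and> WSig j k \<in> pool c'}" using card_sub[OF b] by blast
qed

lemma J9_pres: "J9 f Byz c \<Longrightarrow> pool c \<subseteq> pool c' \<Longrightarrow> (\<forall>w j. w < nW f \<longrightarrow> w \<notin> Byz \<longrightarrow> WSig w j \<in> pool c' \<longrightarrow> WSig w j \<in> pool c)
  \<Longrightarrow> (\<forall>w. wstored c w \<le> wstored c' w) \<Longrightarrow> J9 f Byz c'"
  unfolding J9_def by (meson le_trans subsetD)

lemma inv_init: "inv f Byz BP s1 r1 (init_conf s1 r1)"
  unfolding inv_def init_conf_def J6_def J7_def J8_def J9_def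
  apply auto
  apply (case_tac p; auto)
  done

lemma L_bpu:
  assumes I: "inv f Byz BP s1 r1 c" and "p \<in> BP"
  shows "inv f Byz BP s1 r1 (c\<lparr>pool := insert (SigUpd p x i) (pool c)\<rparr>)"
  using assms unfolding inv_def apply (elim conjE) apply (intro conjI)
    subgoal by (simp; fail | (auto; fail))
    subgoal by (simp; fail | (auto; fail))
    subgoal by (simp; fail | (auto; fail))
    subgoal by (simp; fail | (auto; fail))
    subgoal by (simp; fail | (auto; fail))
    subgoal by ((rule J6_pres[where c=c]; auto; fail) | (auto simp: J6_def intro: card_sub; fail))
    subgoal by ((rule J7_pres[where c=c]; auto; fail) | (auto simp: J7_def intro: card_sub; fail))
    subgoal by ((rule J8_pres[where c=c]; auto; fail) | (auto simp: J8_def intro: card_sub; fail))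
    subgoal by ((rule J9_pres[where c=c]; auto; fail) | (auto simp: J9_def intro: card_sub; fail))
    subgoal by (simp; fail | (auto; fail))
  done

lemma L_bps:
  assumes I: "inv f Byz BP s1 r1 c" and "p \<in> BP"
  shows "inv f Byz BP s1 r1 (c\<lparr>pool := insert (SigSeq p i) (pool c)\<rparr>)"
  using assms unfolding inv_def apply (elim conjE) apply (intro conjI)
    subgoal by (simp; fail | (auto; fail))
    subgoal by (simp; fail | (auto; fail))
    subgoal by (simp; fail | (auto; fail))
    subgoal by (simp; fail | (auto; fail))
    subgoal by (simp; fail | (auto; fail))
    subgoal by ((rule J6_pres[where c=c]; auto; fail) | (auto simp: J6_def intro: card_sub; fail))
    subgoal by ((rule J7_pres[where c=c]; auto; fail) | (auto simp: J7_def intro: card_sub; fail))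
    subgoal by ((rule J8_pres[where c=c]; auto; fail) | (auto simp: J8_def intro: card_sub; fail))
    subgoal by ((rule J9_pres[where c=c]; auto; fail) | (auto simp: J9_def intro: card_sub; fail))
    subgoal by (simp; fail | (auto; fail))
  done

lemma L_bpo:
  assumes I: "inv f Byz BP s1 r1 c" and "p \<in> BP"
  shows "inv f Byz BP s1 r1 (c\<lparr>pool := insert (SigOpt p s i) (pool c)\<rparr>)"
  using assms unfolding inv_def apply (elim conjE) apply (intro conjI)
    subgoal by (simp; fail | (auto; fail))
    subgoal by (simp; fail | (auto; fail))
    subgoal by (simp; fail | (auto; fail))
    subgoal by (simp; fail | (auto; fail))
    subgoal by (simp; fail | (auto; fail))
    subgoal by ((rule J6_pres[where c=c]; auto; fail) | (auto simp: J6_def intro: card_sub; fail))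
    subgoal by ((rule J7_pres[where c=c]; auto; fail) | (auto simp: J7_def intro: card_sub; fail))
    subgoal by ((rule J8_pres[where c=c]; auto; fail) | (auto simp: J8_def intro: card_sub; fail))
    subgoal by ((rule J9_pres[where c=c]; auto; fail) | (auto simp: J9_def intro: card_sub; fail))
    subgoal by (simp; fail | (auto; fail))
  done

lemma L_bws:
  assumes I: "inv f Byz BP s1 r1 c" and "j \<in> Byz"
  shows "inv f Byz BP s1 r1 (c\<lparr>pool := insert (WSig j i) (pool c)\<rparr>)"
  using assms unfolding inv_def apply (elim conjE) apply (intro conjI)
    subgoal by (simp; fail | (auto; fail))
    subgoal by (simp; fail | (auto; fail))
    subgoal by (simp; fail | (auto; fail))
    subgoal by (simp; fail | (auto; fail))
    subgoal by (simp; fail | (auto; fail))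
    subgoal by ((rule J6_pres[where c=c]; auto; fail) | (auto simp: J6_def intro: card_sub; fail))
    subgoal by ((rule J7_pres[where c=c]; auto; fail) | (auto simp: J7_def intro: card_sub; fail))
    subgoal by ((rule J8_pres[where c=c]; auto; fail) | (auto simp: J8_def intro: card_sub; fail))
    subgoal by ((rule J9_pres[where c=c]; auto; fail) | (auto simp: J9_def intro: card_sub; fail))
    subgoal by (simp; fail | (auto; fail))
  done

lemma L_bwc:
  assumes I: "inv f Byz BP s1 r1 c" and "j \<in> Byz"
  shows "inv f Byz BP s1 r1 (c\<lparr>annc := insert (j, i) (annc c)\<rparr>)"
  using assms unfolding inv_def apply (elim conjE) apply (intro conjI)
    subgoal by (simp; fail | (auto; fail))
    subgoal by (simp; fail | (auto; fail))
    subgoal by (simp; fail | (auto; fail))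
    subgoal by (simp; fail | (auto; fail))
    subgoal by (simp; fail | (auto; fail))
    subgoal by ((rule J6_pres[where c=c]; auto; fail) | (auto simp: J6_def intro: card_sub; fail))
    subgoal by ((rule J7_pres[where c=c]; auto; fail) | (auto simp: J7_def intro: card_sub; fail))
    subgoal by ((rule J8_pres[where c=c]; auto; fail) | (auto simp: J8_def intro: card_sub; fail))
    subgoal by ((rule J9_pres[where c=c]; auto; fail) | (auto simp: J9_def intro: card_sub; fail))
    subgoal by (simp; fail | (auto; fail))
  done

lemma L_hpu:
  assumes I: "inv f Byz BP s1 r1 c" and "p \<notin> BP" "\<not> pstop c p" "pcur c p = k" "thr f \<le> card {j. j < nW f \<and> WSig j k \<in> pool c}" "\<forall>y. SigUpd p y (Suc k) \<notin> pool c"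
  shows "inv f Byz BP s1 r1 (c\<lparr>pool := insert (SigUpd p (s, r) (Suc k)) (pool c)\<rparr>)"
  using assms unfolding inv_def apply (elim conjE) apply (intro conjI)
    subgoal by (simp; fail | (auto; fail))
    subgoal by (simp; fail | (auto; fail))
    subgoal by (simp; fail | (auto; fail))
    subgoal by (simp; fail | (auto; fail))
    subgoal by (simp; fail | (auto; fail))
    subgoal by ((rule J6_pres[where c=c]; auto; fail) | (auto simp: J6_def intro: card_sub; fail))
    subgoal by ((rule J7_pres[where c=c]; auto; fail) | (auto simp: J7_def intro: card_sub; fail))
    subgoal by ((rule J8_pres[where c=c]; auto; fail) | (auto simp: J8_def intro: card_sub; fail))
    subgoal by ((rule J9_pres[where c=c]; auto; fail) | (auto simp: J9_def intro: card_sub; fail))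
    subgoal by (simp; fail | (auto; fail))
  done

lemma L_hps:
  assumes I: "inv f Byz BP s1 r1 c" and "p \<notin> BP" "\<not> pstop c p" "pcur c p = k" "SigUpd p x (Suc k) \<in> pool c" "SigUpd (other p) x (Suc k) \<in> pool c"
  shows "inv f Byz BP s1 r1 (c\<lparr>pool := insert (SigSeq p (Suc k)) (pool c), pcur := (pcur c)(p := Suc k)\<rparr>)"
  using assms unfolding inv_def apply (elim conjE) apply (intro conjI)
    subgoal by (simp; fail | (auto; fail))
    subgoal by (simp; fail | (auto; fail))
    subgoal by (simp; fail | (auto; fail))
    subgoal by (simp; fail | (auto; fail))
    subgoal
    proof (intro allI impI)
      fix q j assume q: "q \<notin> BP" and m: "SigSeq q j \<in> pool (c\<lparr>pool := insert (SigSeq p (Suc k)) (pool c), pcur := (pcur c)(p := Suc k)\<rparr>)"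
      show "j \<le> pcur (c\<lparr>pool := insert (SigSeq p (Suc k)) (pool c), pcur := (pcur c)(p := Suc k)\<rparr>) q"
      proof (cases "q = p \<and> j = Suc k")
        case True then show ?thesis by simp
      next
        case False
        then have "SigSeq q j \<in> pool c" using m by auto
        then have "j \<le> pcur c q" using q I unfolding inv_def by blast
        then show ?thesis using assms(4) by auto
      qed
    qed
    subgoal by ((rule J6_pres[where c=c]; auto; fail) | (auto simp: J6_def intro: card_sub; fail))
    subgoal unfolding J7_def
    proof (intro allI impI)
      fix q assume q: "q \<notin> BP"
      show "\<exists>y. SigUpd q y (pcur (c\<lparr>pool := insert (SigSeq p (Suc k)) (pool c), pcur := (pcur c)(p := Suc k)\<rparr>) q) \<in> pool (c\<lparr>pool := insert (SigSeq p (Suc k)) (pool c), pcur := (pcur c)(p := Suc k)\<rparr>) \<and>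
             SigUpd (other q) y (pcur (c\<lparr>pool := insert (SigSeq p (Suc k)) (pool c), pcur := (pcur c)(p := Suc k)\<rparr>) q) \<in> pool (c\<lparr>pool := insert (SigSeq p (Suc k)) (pool c), pcur := (pcur c)(p := Suc k)\<rparr>)"
      proof (cases "q = p")
        case True then show ?thesis using assms(4-6) by (cases x) auto
      next
        case False
        obtain y where "SigUpd q y (pcur c q) \<in> pool c" "SigUpd (other q) y (pcur c q) \<in> pool c"
          using q I unfolding inv_def J7_def by blast
        then show ?thesis using False by (cases y) auto
      qed
    qed
    subgoal by ((rule J8_pres[where c=c]; auto; fail) | (auto simp: J8_def intro: card_sub; fail))
    subgoal by ((rule J9_pres[where c=c]; auto; fail) | (auto simp: J9_def intro: card_sub; fail))
    subgoal by (simp; fail | (auto; fail))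
  done

lemma L_hpo:
  assumes I: "inv f Byz BP s1 r1 c" and "p \<notin> BP" "pcur c p = k" "SigUpd p (s, r) k \<in> pool c"
  shows "inv f Byz BP s1 r1 (c\<lparr>pool := insert (SigOpt p s k) (pool c), pstop := (pstop c)(p := True)\<rparr>)"
  using assms unfolding inv_def apply (elim conjE) apply (intro conjI)
    subgoal by (simp; fail | (auto; fail))
    subgoal by (simp; fail | (auto; fail))
    subgoal by (simp; fail | (auto; fail))
    subgoal by (simp; fail | (auto; fail))
    subgoal by (simp; fail | (auto; fail))
    subgoal by ((rule J6_pres[where c=c]; auto; fail) | (auto simp: J6_def intro: card_sub; fail))
    subgoal by ((rule J7_pres[where c=c]; auto; fail) | (auto simp: J7_def intro: card_sub; fail))
    subgoal by ((rule J8_pres[where c=c]; auto; fail) | (auto simp: J8_def intro: card_sub; fail))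
    subgoal by ((rule J9_pres[where c=c]; auto; fail) | (auto simp: J9_def intro: card_sub; fail))
    subgoal by (simp; fail | (auto; fail))
  done

lemma L_hws:
  assumes I: "inv f Byz BP s1 r1 c" and "j < nW f" "j \<notin> Byz" "\<not> wclosed c j" "wstored c j = k" "SigSeq PA (Suc k) \<in> pool c" "SigSeq PB (Suc k) \<in> pool c"
  shows "inv f Byz BP s1 r1 (c\<lparr>pool := insert (WSig j (Suc k)) (pool c), wstored := (wstored c)(j := Suc k)\<rparr>)"
  using assms unfolding inv_def apply (elim conjE) apply (intro conjI)
    subgoal by (simp; fail | (auto; fail))
    subgoal by (simp; fail | (auto; fail))
    subgoal by (simp; fail | (auto; fail))
    subgoal by (simp; fail | (auto; fail))
    subgoal by (simp; fail | (auto; fail))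
    subgoal by ((rule J6_pres[where c=c]; auto; fail) | (auto simp: J6_def intro: card_sub; fail))
    subgoal by ((rule J7_pres[where c=c]; auto; fail) | (auto simp: J7_def intro: card_sub; fail))
    subgoal by ((rule J8_pres[where c=c]; auto; fail) | (auto simp: J8_def intro: card_sub; fail))
    subgoal unfolding J9_def
    proof (intro allI impI)
      fix w i assume w: "w < nW f" "w \<notin> Byz" and m: "WSig w i \<in> pool (c\<lparr>pool := insert (WSig j (Suc k)) (pool c), wstored := (wstored c)(j := Suc k)\<rparr>)"
      show "i \<le> wstored (c\<lparr>pool := insert (WSig j (Suc k)) (pool c), wstored := (wstored c)(j := Suc k)\<rparr>) w \<and>
          SigSeq PA i \<in> pool (c\<lparr>pool := insert (WSig j (Suc k)) (pool c), wstored := (wstored c)(j := Suc k)\<rparr>) \<and>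
          SigSeq PB i \<in> pool (c\<lparr>pool := insert (WSig j (Suc k)) (pool c), wstored := (wstored c)(j := Suc k)\<rparr>)"
      proof (cases "w = j \<and> i = Suc k")
        case True then show ?thesis using assms(6,7) by simp
      next
        case False
        then have "WSig w i \<in> pool c" using m by auto
        then have "i \<le> wstored c w \<and> SigSeq PA i \<in> pool c \<and> SigSeq PB i \<in> pool c"
          using w I unfolding inv_def J9_def by blast
        then show ?thesis using assms(5) by auto
      qed
    qed
    subgoal by (simp; fail | (auto; fail))
  done

lemma L_hwc:
  assumes I: "inv f Byz BP s1 r1 c" and "j < nW f" "j \<notin> Byz" "\<not> wclosed c j"
  shows "inv f Byz BP s1 r1 (c\<lparr>annc := insert (j, wstored c j) (annc c), wclosed := (wclosed c)(j := True)\<rparr>)"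
  using assms unfolding inv_def apply (elim conjE) apply (intro conjI)
    subgoal by (simp; fail | (auto; fail))
    subgoal by (simp; fail | (auto; fail))
    subgoal by (simp; fail | (auto; fail))
    subgoal by (simp; fail | (auto; fail))
    subgoal by (simp; fail | (auto; fail))
    subgoal by ((rule J6_pres[where c=c]; auto; fail) | (auto simp: J6_def intro: card_sub; fail))
    subgoal by ((rule J7_pres[where c=c]; auto; fail) | (auto simp: J7_def intro: card_sub; fail))
    subgoal by ((rule J8_pres[where c=c]; auto; fail) | (auto simp: J8_def intro: card_sub; fail))
    subgoal by ((rule J9_pres[where c=c]; auto; fail) | (auto simp: J9_def intro: card_sub; fail))
    subgoal by (simp; fail | (auto; fail))
  done

lemma L_cc:
  assumes I: "inv f Byz BP s1 r1 c" and "True"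
  shows "inv f Byz BP s1 r1 (c\<lparr>chclosed := z\<rparr>)"
  using assms unfolding inv_def apply (elim conjE) apply (intro conjI)
    subgoal by (simp; fail | (auto; fail))
    subgoal by (simp; fail | (auto; fail))
    subgoal by (simp; fail | (auto; fail))
    subgoal by (simp; fail | (auto; fail))
    subgoal by (simp; fail | (auto; fail))
    subgoal by ((rule J6_pres[where c=c]; auto; fail) | (auto simp: J6_def intro: card_sub; fail))
    subgoal by ((rule J7_pres[where c=c]; auto; fail) | (auto simp: J7_def intro: card_sub; fail))
    subgoal by ((rule J8_pres[where c=c]; auto; fail) | (auto simp: J8_def intro: card_sub; fail))
    subgoal by ((rule J9_pres[where c=c]; auto; fail) | (auto simp: J9_def intro: card_sub; fail))
    subgoal by (simp; fail | (auto; fail))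
  done


lemma inv_step: assumes "step f Byz BP c c'" "inv f Byz BP s1 r1 c" shows "inv f Byz BP s1 r1 c'"
  using assms(1)
proof cases
  case (byz_party_upd p x i) then show ?thesis by (auto intro: L_bpu[OF assms(2)])
next
  case (byz_party_seq p i) then show ?thesis by (auto intro: L_bps[OF assms(2)])
next
  case (byz_party_opt p s i) then show ?thesis by (auto intro: L_bpo[OF assms(2)])
next
  case (byz_warden_sig j i) then show ?thesis by (auto intro: L_bws[OF assms(2)])
next
  case (byz_warden_close j i) then show ?thesis by (auto intro: L_bwc[OF assms(2)])
next
  case (hon_party_upd p k s r) then show ?thesis by (auto intro: L_hpu[OF assms(2)])
next
  case (hon_party_seq p k x) then show ?thesis by (auto intro: L_hps[OF assms(2)])
next
  case (hon_party_opt p k s r) then show ?thesis by (auto intro: L_hpo[OF assms(2)])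
next
  case (hon_warden_sig j k) then show ?thesis by (auto intro: L_hws[OF assms(2)])
next
  case (hon_warden_close j) then show ?thesis by (auto intro: L_hwc[OF assms(2)])
next
  case (contract_opt s i) then show ?thesis by (auto intro: L_cc[OF assms(2)])
next
  case (contract_pess Q i s r) then show ?thesis by (auto intro: L_cc[OF assms(2)])
qed

lemma inv_reach: "reachable f Byz BP s1 r1 c \<Longrightarrow> inv f Byz BP s1 r1 c"
  unfolding reachable_def
  by (induction rule: rtranclp_induct) (auto intro: inv_init inv_step)

lemma invD:
  assumes "inv f Byz BP s1 r1 c"
  shows "\<forall>p x. p \<notin> BP \<longrightarrow> SigUpd p x 0 \<notin> pool c"
    "\<forall>p x. p \<notin> BP \<longrightarrow> SigUpd p x 1 \<in> pool c \<longrightarrow> x = (s1,r1)"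
    "\<forall>p x y k. p \<notin> BP \<longrightarrow> SigUpd p x k \<in> pool c \<longrightarrow> SigUpd p y k \<in> pool c \<longrightarrow> x = y"
    "\<forall>p. p \<notin> BP \<longrightarrow> 1 \<le> pcur c p"
    "\<forall>p j. p \<notin> BP \<longrightarrow> SigSeq p j \<in> pool c \<longrightarrow> j \<le> pcur c p"
    "J6 BP c" "J7 BP c" "J8 f BP c" "J9 f Byz c"
    "\<forall>w v. w < nW f \<longrightarrow> w \<notin> Byz \<longrightarrow> (w,v) \<in> annc c \<longrightarrow> wclosed c w \<and> v = wstored c w"
  using assms unfolding inv_def by simp_all

lemma uniq_bs:
  assumes "inv f Byz BP s1 r1 c" "p \<notin> BP" "both_signed c s j" "both_signed c s' j"
  shows "s = s'"
proof -
  obtain r where "SigUpd PA (s, r) j \<in> pool c" "SigUpd PB (s, r) j \<in> pool c" using assms(3) unfolding both_signed_def by blast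
  then have 1: "SigUpd p (s, r) j \<in> pool c" by (cases p) auto
  obtain r' where "SigUpd PA (s', r') j \<in> pool c" "SigUpd PB (s', r') j \<in> pool c" using assms(4) unfolding both_signed_def by blast
  then have 2: "SigUpd p (s', r') j \<in> pool c" by (cases p) auto
  from 1 2 show ?thesis using invD(3)[OF assms(1)] assms(2) by blast
qed

lemma honest_signer:
  assumes "Byz \<subseteq> {..<nW f}" "card Byz \<le> f" "thr f \<le> card {w. w < nW f \<and> WSig w j \<in> pool c}"
  shows "\<exists>w. w < nW f \<and> w \<notin> Byz \<and> WSig w j \<in> pool c"
proof (rule ccontr)
  assume "\<not> ?thesis"
  then have "{w. w < nW f \<and> WSig w j \<in> pool c} \<subseteq> Byz" by blast
  moreover have "finite Byz" using assms(1) finite_subset by blast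
  ultimately have "card {w. w < nW f \<and> WSig w j \<in> pool c} \<le> card Byz" by (rule card_mono[rotated])
  then show False using assms(2,3) unfolding thr_def by linarith
qed

lemma quorum:
  assumes "Byz \<subseteq> {..<nW f}" "card Byz \<le> f" "thr f \<le> card {w. w < nW f \<and> WSig w j \<in> pool c}"
    and "inj_on fst Q" "card Q = thr f" "\<forall>q\<in>Q. fst q < nW f"
  shows "\<exists>w v. w < nW f \<and> w \<notin> Byz \<and> WSig w j \<in> pool c \<and> (w, v) \<in> Q"
proof (rule ccontr)
  assume H: "\<not> ?thesis"
  define A where "A = fst ` Q"
  define S where "S = {w. w < nW f \<and> WSig w j \<in> pool c}"
  have cA: "card A = thr f" unfolding A_def using assms(4,5) card_image by metis
  have As: "A \<subseteq> {..<nW f}" unfolding A_def using assms(6) by auto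
  have Ss: "S \<subseteq> {..<nW f}" unfolding S_def by auto
  have fA: "finite A" using As finite_subset by blast
  have fS: "finite S" using Ss finite_subset by blast
  have "card (A \<union> S) \<le> nW f" using As Ss card_mono[of "{..<nW f}" "A \<union> S"] by auto
  moreover have "card A + card S = card (A \<union> S) + card (A \<inter> S)" using card_Un_Int[OF fA fS] .
  ultimately have "card (A \<inter> S) > f" using cA assms(3) unfolding S_def thr_def nW_def by linarith
  moreover have "A \<inter> S \<subseteq> Byz" using H unfolding A_def S_def by force
  moreover have "finite Byz" using assms(1) finite_subset by blast
  ultimately show False using assms(2) card_mono by (metis leD le_trans)
qed

lemma close_ok:
  assumes I: "inv f Byz BP s1 r1 c" and p: "p \<notin> BP" and bs: "both_signed c s i" and i1: "1 \<le> i"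
    and fresh: "\<And>s' j. both_signed c s' j \<Longrightarrow> thr f \<le> card {w. w < nW f \<and> WSig w j \<in> pool c} \<Longrightarrow> j \<le> i"
    and c': "c' = c\<lparr>chclosed := Some (s, i)\<rparr>"
  shows "committed f s1 c' s i \<and>
         (\<forall>s' j. committed f s1 c' s' j \<longrightarrow> j < i \<or> (j = i \<and> s' = s))"
proof
  have bs': "both_signed c' s' j = both_signed c s' j" for s' j
    using c' unfolding both_signed_def by simp
  have pool': "pool c' = pool c" using c' by simp
  have thr_next: "thr f \<le> card {w. w < nW f \<and> WSig w i \<in> pool c}" if bsn: "both_signed c s'' (Suc i)" for s''
  proof -
    obtain r where "SigUpd PA (s'', r) (Suc i) \<in> pool c" "SigUpd PB (s'', r) (Suc i) \<in> pool c" using bsn unfolding both_signed_def by blast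
    then have "SigUpd p (s'', r) (Suc i) \<in> pool c" by (cases p) auto
    then show ?thesis using invD(8)[OF I] p i1 unfolding J8_def by blast
  qed
  show "committed f s1 c' s i"
  proof (cases "thr f \<le> card {w. w < nW f \<and> WSig w i \<in> pool c}")
    case True then show ?thesis unfolding committed_def using bs bs' pool' by simp
  next
    case False
    then have "\<not> (\<exists>s''. both_signed c' s'' (Suc i))" using thr_next bs' by blast
    moreover have "\<not> invalidated c' i" unfolding invalidated_def using c' i1 by auto
    ultimately have "valid c' s i" unfolding valid_def using bs bs' by simp
    then show ?thesis unfolding committed_def on_chain_def using c' by simp
  qed
  show "\<forall>s' j. committed f s1 c' s' j \<longrightarrow> j < i \<or> (j = i \<and> s' = s)"
  proof (intro allI impI)
    fix s' j assume cm: "committed f s1 c' s' j"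
    show "j < i \<or> (j = i \<and> s' = s)"
    proof (cases "both_signed c s' j \<and> thr f \<le> card {w. w < nW f \<and> WSig w j \<in> pool c}")
      case True
      then have "j \<le> i" using fresh by blast
      moreover have "j = i \<Longrightarrow> s' = s" using uniq_bs[OF I p] True bs by blast
      ultimately show ?thesis by linarith
    next
      case False
      then have "valid c' s' j \<and> on_chain s1 c' s' j" using cm bs' pool' unfolding committed_def by auto
      then have "(s', j) = (s1, 1) \<or> (s', j) = (s, i)" unfolding on_chain_def using c' by auto
      moreover have "i = 1 \<Longrightarrow> s = s1"
      proof -
        assume "i = 1"
        obtain r where "SigUpd PA (s, r) i \<in> pool c" "SigUpd PB (s, r) i \<in> pool c" using bs unfolding both_signed_def by blast
        then have "SigUpd p (s, r) i \<in> pool c" by (cases p) auto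
        then show "s = s1" using invD(2)[OF I] p \<open>i = 1\<close> by blast
      qed
      ultimately show ?thesis using i1 by force
    qed
  qed
qed

lemma close_cases:
  assumes "step f Byz BP c c'" "chclosed c = None" "chclosed c' = Some (s, i)"
  shows "c' = c\<lparr>chclosed := Some (s, i)\<rparr> \<and>
    ((SigOpt PA s i \<in> pool c \<and> SigOpt PB s i \<in> pool c) \<or>
     (\<exists>Q r. Q \<subseteq> annc c \<and> inj_on fst Q \<and> card Q = thr f \<and> (\<forall>q\<in>Q. fst q < nW f) \<and> i = Max (snd ` Q) \<and>
        SigUpd PA (s, r) i \<in> pool c \<and> SigUpd PB (s, r) i \<in> pool c))"
  using assms(1)
proof cases
  case (contract_opt s0 i0) then show ?thesis using assms(3) by auto
next
  case (contract_pess Q i0 s0 r) then show ?thesis using assms(3) by auto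
qed (use assms(2,3) in \<open>simp_all\<close>)

theorem theorem1:
  fixes f :: nat and Byz :: "nat set" and BP :: "party set"
    and s1 :: 's and r1 :: nat and c c' :: "'s conf" and s :: 's and i :: nat
  assumes "Byz \<subseteq> {..<nW f}" and "card Byz \<le> f"
    and "card BP \<le> 1"
    and "reachable f Byz BP s1 r1 c"
    and "step f Byz BP c c'"
    and "chclosed c = None" and "chclosed c' = Some (s, i)"
  shows "committed f s1 c' s i \<and>
         (\<forall>s' j. committed f s1 c' s' j \<longrightarrow> j < i \<or> (j = i \<and> s' = s))"
proof -
  have I: "inv f Byz BP s1 r1 c" using assms(4) by (rule inv_reach)
  obtain p where p: "p \<notin> BP"
  proof (cases "PA \<in> BP \<and> PB \<in> BP")
    case True
    have "BP = {PA, PB}"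
    proof
      show "BP \<subseteq> {PA, PB}"
      proof
        fix x show "x \<in> {PA, PB}" by (cases x) auto
      qed
      show "{PA, PB} \<subseteq> BP" using True by simp
    qed
    then have "card BP = 2" by simp
    then show ?thesis using assms(3) by simp
  next
    case False then show ?thesis using that by blast
  qed
  have Jall: "J6 BP c" "J7 BP c" "J9 f Byz c"
    and W2: "\<forall>w v. w < nW f \<longrightarrow> w \<notin> Byz \<longrightarrow> (w,v) \<in> annc c \<longrightarrow> wclosed c w \<and> v = wstored c w"
    using invD[OF I] by blast+
  have seq_le: "j \<le> pcur c p" if "SigSeq PA j \<in> pool c" "SigSeq PB j \<in> pool c" for j
  proof -
    have "SigSeq p j \<in> pool c" using that by (cases p) auto
    then show ?thesis using invD(5)[OF I] p by blast
  qed
  from close_cases[OF assms(5,6,7)] have c': "c' = c\<lparr>chclosed := Some (s, i)\<rparr>"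
    and cs: "(SigOpt PA s i \<in> pool c \<and> SigOpt PB s i \<in> pool c) \<or>
     (\<exists>Q r. Q \<subseteq> annc c \<and> inj_on fst Q \<and> card Q = thr f \<and> (\<forall>q\<in>Q. fst q < nW f) \<and> i = Max (snd ` Q) \<and>
        SigUpd PA (s, r) i \<in> pool c \<and> SigUpd PB (s, r) i \<in> pool c)" by blast+
  from cs show ?thesis
  proof (elim disjE exE conjE)
    assume opt: "SigOpt PA s i \<in> pool c" "SigOpt PB s i \<in> pool c"
    have "SigOpt p s i \<in> pool c" using opt by (cases p) auto
    then obtain r where pc: "pcur c p = i" and su: "SigUpd p (s, r) i \<in> pool c"
      using Jall(1) p unfolding J6_def by blast
    obtain x where x: "SigUpd p x (pcur c p) \<in> pool c" "SigUpd (other p) x (pcur c p) \<in> pool c"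
      using Jall(2) p unfolding J7_def by blast
    have "x = (s, r)" using x(1) su pc invD(3)[OF I] p by blast
    then have bs: "both_signed c s i" using x su pc unfolding both_signed_def by (cases p) auto
    have i1: "1 \<le> i" using invD(4)[OF I] p pc by blast
    show ?thesis
    proof (rule close_ok[OF I p bs i1 _ c'])
      fix s' j assume "thr f \<le> card {w. w < nW f \<and> WSig w j \<in> pool c}"
      then obtain w where "w < nW f" "w \<notin> Byz" "WSig w j \<in> pool c"
        using honest_signer[OF assms(1,2)] by blast
      then have "SigSeq PA j \<in> pool c" "SigSeq PB j \<in> pool c" using Jall(3) unfolding J9_def by blast+
      then show "j \<le> i" using seq_le pc by auto
    qed
  next
    fix Q r
    assume Qa: "Q \<subseteq> annc c" "inj_on fst Q" "card Q = thr f" "\<forall>q\<in>Q. fst q < nW f"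
      and ii: "i = Max (snd ` Q)" and sa: "SigUpd PA (s, r) i \<in> pool c" "SigUpd PB (s, r) i \<in> pool c"
    have bs: "both_signed c s i" using sa unfolding both_signed_def by blast
    have i1: "1 \<le> i"
    proof (rule ccontr)
      assume "\<not> 1 \<le> i"
      then have "i = 0" by simp
      then have "SigUpd p (s, r) 0 \<in> pool c" using sa by (cases p) auto
      then show False using invD(1)[OF I] p by blast
    qed
    have "card Q \<noteq> 0" using Qa(3) unfolding thr_def by simp
    then have finQ: "finite Q" by (meson card.infinite)
    show ?thesis
    proof (rule close_ok[OF I p bs i1 _ c'])
      fix s' j assume th: "thr f \<le> card {w. w < nW f \<and> WSig w j \<in> pool c}"
      obtain w v where w: "w < nW f" "w \<notin> Byz" "WSig w j \<in> pool c" "(w, v) \<in> Q"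
        using quorum[OF assms(1,2) th Qa(2,3,4)] by blast
      have "j \<le> wstored c w" using Jall(3) w unfolding J9_def by blast
      moreover have "(w, v) \<in> annc c" using Qa(1) w(4) by (rule subsetD)
      then have "v = wstored c w" using W2 w(1,2) by blast
      moreover have "v \<in> snd ` Q" using w(4) by (rule rev_image_eqI) simp
      then have "v \<le> Max (snd ` Q)" using finQ by (intro Max_ge) auto
      ultimately show "j \<le> i" using ii by simp
    qed
  qed
qed

end
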